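(* Let $k,d$ be positive integers and let $0\le r\le k-1$ with $d\equiv r\pmod k$. There exists $n_0=n_0(d,k)$ such that for every $n\ge n_0$ and every $\mathcal{A}\subset 2^{[n]}$ with $\mathrm{VC}(\triangle\mathcal{A}^k)\le d$, we have $|\mathcal{A}|\le 2^r\binom{n-r}{\le\lfloor d/k\rfloor}$.
   Context: $[n]=\{1,\dots,n\}$. For $Y\subset[n]$, $Y$ is shattered by $\mathcal{F}\subset 2^{[n]}$ if $\{S\cap Y: S\in\mathcal{F}\}=2^Y$; $\mathrm{VC}(\mathcal{F})$ is the largest cardinality of a set shattered by $\mathcal{F}$. $\triangle\mathcal{A}^k=\{S_1\triangle\cdots\triangle S_k: S_i\in\mathcal{A}\ \forall i\in[k]\}$ (the $S_i$ need not be distinct), where $\triangle$ is symmetric difference. $\binom{m}{\le t}=\sum_{j=0}^{t}\binom{m}{j}$. *)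

theory Defs
  imports Main
begin

definition shatters :: "nat set set \<Rightarrow> nat set \<Rightarrow> bool" where
  "shatters F Y \<longleftrightarrow> (\<lambda>S. S \<inter> Y) ` F = Pow Y"

definition VC :: "nat \<Rightarrow> nat set set \<Rightarrow> nat" where
  "VC n F = Max {card Y | Y. Y \<subseteq> {1..n} \<and> shatters F Y}"

text \<open>k-fold symmetric difference family (defined for k >= 1).\<close>
fun symdiff_pow :: "nat set set \<Rightarrow> nat \<Rightarrow> nat set set" where
  "symdiff_pow A 0 = {{}}"
| "symdiff_pow A (Suc 0) = A"
| "symdiff_pow A (Suc (Suc k)) =
     {S \<union> T - S \<inter> T | S T. S \<in> A \<and> T \<in> symdiff_pow A (Suc k)}"

definition binom_le :: "nat \<Rightarrow> nat \<Rightarrow> nat" where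
  "binom_le m t = (\<Sum>j=0..t. m choose j)"

end

theory Submission
  imports Defs
begin

definition mv :: "nat \<Rightarrow> nat set set \<Rightarrow> nat set \<Rightarrow> nat set" where
  "mv i F S = (if i \<in> S \<and> S - {i} \<notin> F then S - {i} else S)"
definition shift :: "nat \<Rightarrow> nat set set \<Rightarrow> nat set set" where
  "shift i F = mv i F ` F"
lemma mv1: "i \<in> S \<Longrightarrow> S - {i} \<notin> F \<Longrightarrow> mv i F S = S - {i}" by (simp add: mv_def)
lemma mv2: "\<not> (i \<in> S \<and> S - {i} \<notin> F) \<Longrightarrow> mv i F S = S" unfolding mv_def by auto
lemma mv_sub: "mv i F S \<subseteq> S" by (simp add: mv_def)

lemma shift_char:
  "T \<in> shift i F \<longleftrightarrow> (i \<notin> T \<and> (T \<in> F \<or> insert i T \<in> F)) \<or> (i \<in> T \<and> T \<in> F \<and> T - {i} \<in> F)"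
proof
  assume "T \<in> shift i F"
  then obtain S where S: "S \<in> F" "T = mv i F S" unfolding shift_def by auto
  show "(i \<notin> T \<and> (T \<in> F \<or> insert i T \<in> F)) \<or> (i \<in> T \<and> T \<in> F \<and> T - {i} \<in> F)"
  proof (cases "i \<in> S \<and> S - {i} \<notin> F")
    case True
    then have "T = S - {i}" using S mv1 by auto
    then have "insert i T = S" "i \<notin> T" using True by auto
    then show ?thesis using S by auto
  next
    case False
    then have "T = S" using S mv2 by auto
    then show ?thesis using S False by auto
  qed
next
  assume h: "(i \<notin> T \<and> (T \<in> F \<or> insert i T \<in> F)) \<or> (i \<in> T \<and> T \<in> F \<and> T - {i} \<in> F)"
  show "T \<in> shift i F"
  proof (cases "i \<in> T")
    case True
    then have "mv i F T = T" "T \<in> F" using h mv2 by auto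
    then show ?thesis unfolding shift_def by (metis image_eqI)
  next
    case False
    show ?thesis
    proof (cases "T \<in> F")
      case True
      then have "mv i F T = T" using False mv2 by auto
      then show ?thesis unfolding shift_def using True by (metis image_eqI)
    next
      case F2: False
      then have "insert i T \<in> F" using h False by auto
      moreover have "mv i F (insert i T) = T" using F2 False mv1[of i "insert i T" F] by auto
      ultimately show ?thesis unfolding shift_def by (metis image_eqI)
    qed
  qed
qed

lemma shift_inj: "inj_on (mv i F) F"
proof (rule inj_onI)
  fix S S' assume S: "S \<in> F" "S' \<in> F" and e: "mv i F S = mv i F S'"
  show "S = S'"
  proof (cases "i \<in> S \<and> S - {i} \<notin> F"; cases "i \<in> S' \<and> S' - {i} \<notin> F")
    assume a: "i \<in> S \<and> S - {i} \<notin> F" "i \<in> S' \<and> S' - {i} \<notin> F"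
    then have "S - {i} = S' - {i}" using e mv1 by metis
    then show ?thesis using a by (metis insert_Diff)
  next
    assume a: "i \<in> S \<and> S - {i} \<notin> F" "\<not> (i \<in> S' \<and> S' - {i} \<notin> F)"
    then have "S - {i} = S'" using e mv1 mv2 by metis
    then show ?thesis using a S by auto
  next
    assume a: "\<not> (i \<in> S \<and> S - {i} \<notin> F)" "i \<in> S' \<and> S' - {i} \<notin> F"
    then have "S = S' - {i}" using e mv1 mv2 by metis
    then show ?thesis using a S by auto
  next
    assume a: "\<not> (i \<in> S \<and> S - {i} \<notin> F)" "\<not> (i \<in> S' \<and> S' - {i} \<notin> F)"
    then show ?thesis using e mv2 by metis
  qed
qed

lemma card_shift: "finite F \<Longrightarrow> card (shift i F) = card F"
  unfolding shift_def using shift_inj card_image by blast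

lemma shift_Pow: "F \<subseteq> Pow N \<Longrightarrow> shift i F \<subseteq> Pow N"
  unfolding shift_def using mv_sub by blast

definition sdf :: "nat set set \<Rightarrow> nat set set \<Rightarrow> nat set set" where
  "sdf A B = {S \<union> T - S \<inter> T | S T. S \<in> A \<and> T \<in> B}"

lemma sdf_mono: "A \<subseteq> A' \<Longrightarrow> B \<subseteq> B' \<Longrightarrow> sdf A B \<subseteq> sdf A' B'"
  unfolding sdf_def by blast

lemma sdf_shift: "sdf (shift i A) (shift i B) \<subseteq> shift i (sdf A B)"
proof
  fix z assume "z \<in> sdf (shift i A) (shift i B)"
  then obtain x y where xy: "x \<in> shift i A" "y \<in> shift i B" "z = x \<union> y - x \<inter> y"
    unfolding sdf_def by auto
  have mem: "\<And>a b. a \<in> A \<Longrightarrow> b \<in> B \<Longrightarrow> a \<union> b - a \<inter> b \<in> sdf A B"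
    unfolding sdf_def by auto
  note cx = xy(1)[unfolded shift_char] and cy = xy(2)[unfolded shift_char]
  show "z \<in> shift i (sdf A B)"
    unfolding shift_char
  proof (cases "i \<in> x"; cases "i \<in> y")
    assume a: "i \<in> x" "i \<in> y"
    then have "x \<in> A" "y \<in> B" using cx cy by auto
    then have "z \<in> sdf A B" using xy(3) mem by metis
    then show "i \<notin> z \<and> (z \<in> sdf A B \<or> insert i z \<in> sdf A B) \<or> i \<in> z \<and> z \<in> sdf A B \<and> z - {i} \<in> sdf A B"
      using a xy(3) by auto
  next
    assume a: "i \<in> x" "i \<notin> y"
    then have xa: "x \<in> A" "x - {i} \<in> A" using cx by auto
    from a cy have "y \<in> B \<or> insert i y \<in> B" by auto
    then have "z \<in> sdf A B \<and> z - {i} \<in> sdf A B"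
    proof
      assume "y \<in> B"
      have "z = x \<union> y - x \<inter> y" by (fact xy(3))
      moreover have "z - {i} = (x - {i}) \<union> y - (x - {i}) \<inter> y" using xy(3) a by auto
      ultimately show ?thesis using mem xa \<open>y \<in> B\<close> by metis
    next
      assume "insert i y \<in> B"
      have "z = (x - {i}) \<union> insert i y - (x - {i}) \<inter> insert i y" using xy(3) a by auto
      moreover have "z - {i} = x \<union> insert i y - x \<inter> insert i y" using xy(3) a by auto
      ultimately show ?thesis using mem xa \<open>insert i y \<in> B\<close> by metis
    qed
    then show "i \<notin> z \<and> (z \<in> sdf A B \<or> insert i z \<in> sdf A B) \<or> i \<in> z \<and> z \<in> sdf A B \<and> z - {i} \<in> sdf A B"
      using a xy(3) by auto
  next
    assume a: "i \<notin> x" "i \<in> y"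
    then have ya: "y \<in> B" "y - {i} \<in> B" using cy by auto
    from a cx have "x \<in> A \<or> insert i x \<in> A" by auto
    then have "z \<in> sdf A B \<and> z - {i} \<in> sdf A B"
    proof
      assume "x \<in> A"
      have "z = x \<union> y - x \<inter> y" by (fact xy(3))
      moreover have "z - {i} = x \<union> (y - {i}) - x \<inter> (y - {i})" using xy(3) a by auto
      ultimately show ?thesis using mem ya \<open>x \<in> A\<close> by metis
    next
      assume "insert i x \<in> A"
      have "z = insert i x \<union> (y - {i}) - insert i x \<inter> (y - {i})" using xy(3) a by auto
      moreover have "z - {i} = insert i x \<union> y - insert i x \<inter> y" using xy(3) a by auto
      ultimately show ?thesis using mem ya \<open>insert i x \<in> A\<close> by metis
    qed
    then show "i \<notin> z \<and> (z \<in> sdf A B \<or> insert i z \<in> sdf A B) \<or> i \<in> z \<and> z \<in> sdf A B \<and> z - {i} \<in> sdf A B"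
      using a xy(3) by auto
  next
    assume a: "i \<notin> x" "i \<notin> y"
    from a cx have x': "x \<in> A \<or> insert i x \<in> A" by auto
    from a cy have y': "y \<in> B \<or> insert i y \<in> B" by auto
    have "z \<in> sdf A B \<or> insert i z \<in> sdf A B"
      using x' y'
    proof (elim disjE)
      assume "x \<in> A" "y \<in> B" then show ?thesis using mem xy(3) by auto
    next
      assume h: "x \<in> A" "insert i y \<in> B"
      have "insert i z = x \<union> insert i y - x \<inter> insert i y" using xy(3) a by auto
      then show ?thesis using mem h by metis
    next
      assume h: "insert i x \<in> A" "y \<in> B"
      have "insert i z = insert i x \<union> y - insert i x \<inter> y" using xy(3) a by auto
      then show ?thesis using mem h by metis
    next
      assume h: "insert i x \<in> A" "insert i y \<in> B"
      have "z = insert i x \<union> insert i y - insert i x \<inter> insert i y" using xy(3) a by auto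
      then show ?thesis using mem h by metis
    qed
    then show "i \<notin> z \<and> (z \<in> sdf A B \<or> insert i z \<in> sdf A B) \<or> i \<in> z \<and> z \<in> sdf A B \<and> z - {i} \<in> sdf A B"
      using a xy(3) by auto
  qed
qed

lemma sp_Suc_Suc: "symdiff_pow A (Suc (Suc k)) = sdf A (symdiff_pow A (Suc k))"
  unfolding sdf_def by (rule symdiff_pow.simps(3))

lemma shatters_iff: "shatters F Y \<longleftrightarrow> Pow Y \<subseteq> (\<lambda>S. S \<inter> Y) ` F"
  unfolding shatters_def by (rule iffI) (simp, rule equalityI, auto)

lemma sp_shift: "symdiff_pow (shift i A) (Suc k) \<subseteq> shift i (symdiff_pow A (Suc k))"
proof (induction k)
  case 0 show ?case unfolding symdiff_pow.simps(2) by (rule order_refl)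
next
  case (Suc k)
  have "symdiff_pow (shift i A) (Suc (Suc k)) = sdf (shift i A) (symdiff_pow (shift i A) (Suc k))"
    by (rule sp_Suc_Suc)
  also have "\<dots> \<subseteq> sdf (shift i A) (shift i (symdiff_pow A (Suc k)))"
    by (rule sdf_mono[OF order_refl Suc])
  also have "\<dots> \<subseteq> shift i (sdf A (symdiff_pow A (Suc k)))" by (rule sdf_shift)
  finally show ?case unfolding sp_Suc_Suc .
qed

lemma shatters_mono: "F \<subseteq> F' \<Longrightarrow> shatters F Y \<Longrightarrow> shatters F' Y"
  unfolding shatters_iff by (meson image_mono subset_trans)

lemma shatters_shift: assumes "shatters (shift i F) Y" shows "shatters F Y"
  unfolding shatters_iff
proof
  fix W assume W: "W \<in> Pow Y"
  have ex: "\<And>W. W \<subseteq> Y \<Longrightarrow> \<exists>T\<in>shift i F. T \<inter> Y = W"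
    using assms unfolding shatters_iff by auto
  show "W \<in> (\<lambda>S. S \<inter> Y) ` F"
  proof (cases "i \<in> Y")
    case False
    obtain T where T: "T \<in> shift i F" "T \<inter> Y = W" using ex W by auto
    show ?thesis
    proof (cases "T \<in> F")
      case True then show ?thesis using T by auto
    next
      case False
      then have "insert i T \<in> F" using T(1) shift_char by auto
      moreover have "insert i T \<inter> Y = W" using T(2) \<open>i \<notin> Y\<close> by auto
      ultimately show ?thesis by (metis image_eqI)
    qed
  next
    case True
    obtain T where T: "T \<in> shift i F" "T \<inter> Y = insert i W" using ex[of "insert i W"] W True by auto
    then have "i \<in> T" by auto
    then have "T \<in> F" "T - {i} \<in> F" using T(1) shift_char by auto
    show ?thesis
    proof (cases "i \<in> W")
      case True
      then have "T \<inter> Y = W" using T(2) by auto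
      then show ?thesis using \<open>T \<in> F\<close> by (metis image_eqI)
    next
      case False
      then have "(T - {i}) \<inter> Y = W" using T(2) by auto
      then show ?thesis using \<open>T - {i} \<in> F\<close> by (metis image_eqI)
    qed
  qed
qed

lemma sdfI: "S \<in> A \<Longrightarrow> T \<in> B \<Longrightarrow> S \<union> T - S \<inter> T \<in> sdf A B"
  unfolding sdf_def by blast

fun xs :: "(nat \<Rightarrow> nat set) \<Rightarrow> nat \<Rightarrow> nat set" where
  "xs h 0 = {}"
| "xs h (Suc m) = h m \<union> xs h m - h m \<inter> xs h m"

lemma xs_in: "(\<forall>i<Suc m. h i \<in> B) \<Longrightarrow> xs h (Suc m) \<in> symdiff_pow B (Suc m)"
proof (induction m)
  case 0 then show ?case by simp
next
  case (Suc m)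
  then have "xs h (Suc m) \<in> symdiff_pow B (Suc m)" by simp
  moreover have "h (Suc m) \<in> B" using Suc.prems by simp
  ultimately show ?case unfolding sp_Suc_Suc xs.simps(2)[of h "Suc m"] by (simp add: sdfI)
qed

lemma xs_disj: "(\<forall>i<m. \<forall>j<m. i \<noteq> j \<longrightarrow> h i \<inter> h j = {}) \<Longrightarrow> xs h m = (\<Union>i<m. h i)"
proof (induction m)
  case 0 then show ?case by simp
next
  case (Suc m)
  then have e: "xs h m = (\<Union>i<m. h i)" by simp
  have "\<forall>i<m. h m \<inter> h i = {}" using Suc.prems by (metis less_Suc_eq less_irrefl_nat)
  then have "h m \<inter> (\<Union>i<m. h i) = {}" by blast
  then show ?case using e by (auto simp: lessThan_Suc)
qed

lemma disjointify: "(\<Union>i<(m::nat). g i - (\<Union>j<i. g j)) = (\<Union>i<m. g i)"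
proof (induction m)
  case 0 then show ?case by simp
next
  case (Suc m)
  then show ?case by (auto simp: lessThan_Suc)
qed

definition downclosed :: "nat set set \<Rightarrow> bool" where
  "downclosed F \<longleftrightarrow> (\<forall>S\<in>F. \<forall>T. T \<subseteq> S \<longrightarrow> T \<in> F)"

lemma downclosedD: "downclosed F \<Longrightarrow> S \<in> F \<Longrightarrow> T \<subseteq> S \<Longrightarrow> T \<in> F"
  unfolding downclosed_def by blast

lemma down_shatters:
  assumes dc: "downclosed B" and k: "0 < k" and g: "\<forall>i<k. g i \<in> B"
  shows "shatters (symdiff_pow B k) (\<Union>i<k. g i)"
  unfolding shatters_iff
proof
  fix W assume W: "W \<in> Pow (\<Union>i<k. g i)"
  define h where "h i = (g i - (\<Union>j<i. g j)) \<inter> W" for i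
  obtain m where m: "k = Suc m" using k not0_implies_Suc by blast
  have hsub: "h i \<subseteq> g i" for i unfolding h_def by blast
  have hB: "\<forall>i<Suc m. h i \<in> B"
  proof (intro allI impI)
    fix i assume "i < Suc m"
    then have "g i \<in> B" using g m by simp
    then show "h i \<in> B" using downclosedD[OF dc _ hsub] by blast
  qed
  have hdis: "h i \<inter> h j = {}" if "i < j" for i j
  proof -
    have "h j \<inter> g i = {}" unfolding h_def using that by blast
    then show ?thesis using hsub[of i] by blast
  qed
  have disj: "\<forall>i<k. \<forall>j<k. i \<noteq> j \<longrightarrow> h i \<inter> h j = {}"
  proof (intro allI impI)
    fix i j assume "i < k" "j < k" "i \<noteq> j"
    then consider "i < j" | "j < i" by linarith
    then show "h i \<inter> h j = {}"
    proof cases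
      case 1 then show ?thesis by (rule hdis)
    next
      case 2 then show ?thesis using hdis[of j i] by blast
    qed
  qed
  have "xs h k = (\<Union>i<k. h i)" using xs_disj disj by blast
  also have "\<dots> = W \<inter> (\<Union>i<k. g i - (\<Union>j<i. g j))" unfolding h_def by blast
  also have "\<dots> = W" using W disjointify[of g k] by blast
  finally have e: "xs h k = W" .
  have "xs h k \<in> symdiff_pow B k" using xs_in[OF hB] m by simp
  moreover have "W \<inter> (\<Union>i<k. g i) = W" using W by blast
  ultimately show "W \<in> (\<lambda>S. S \<inter> (\<Union>i<k. g i)) ` symdiff_pow B k"
    using e by (metis image_eqI)
qed

lemma down_from_step:
  assumes step: "\<forall>S\<in>B. \<forall>i\<in>S. S - {i} \<in> B" and fin: "\<forall>S\<in>B. finite S"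
  shows "downclosed B"
  unfolding downclosed_def
proof (intro ballI allI impI)
  fix S T assume "S \<in> B" "T \<subseteq> S"
  then show "T \<in> B"
  proof (induction "card S" arbitrary: S rule: less_induct)
    case less
    show ?case
    proof (cases "T = S")
      case True then show ?thesis using less by simp
    next
      case False
      then obtain i where i: "i \<in> S" "i \<notin> T" using less.prems by blast
      have "S - {i} \<in> B" using step less.prems i by blast
      moreover have "card (S - {i}) < card S" using fin less.prems i
        by (meson card_Diff1_less)
      moreover have "T \<subseteq> S - {i}" using less.prems i by blast
      ultimately show ?thesis using less.hyps by blast
    qed
  qed
qed

lemma reduce:
  assumes AN: "A \<subseteq> Pow N" and fN: "finite N" and k: "0 < k"
  shows "\<exists>B. B \<subseteq> Pow N \<and> card B = card A \<and> downclosed B \<and>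
           (\<forall>Y. shatters (symdiff_pow B k) Y \<longrightarrow> shatters (symdiff_pow A k) Y)"
proof -
  define P where "P B \<longleftrightarrow> B \<subseteq> Pow N \<and> card B = card A \<and>
           (\<forall>Y. shatters (symdiff_pow B k) Y \<longrightarrow> shatters (symdiff_pow A k) Y)" for B
  define w where "w B = (\<Sum>S\<in>B. card S)" for B :: "nat set set"
  have "P A" unfolding P_def using AN by blast
  then obtain B where PB: "P B" and minB: "\<And>B'. P B' \<Longrightarrow> w B \<le> w B'"
    using ex_has_least_nat[of P A w] by blast
  have BN: "B \<subseteq> Pow N" using PB P_def by blast
  have finB: "finite B" using BN fN by (meson finite_Pow_iff rev_finite_subset)
  have finS: "\<forall>S\<in>B. finite S" using BN fN by (meson PowD rev_finite_subset subsetD)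
  obtain m where m: "k = Suc m" using k not0_implies_Suc by blast
  have step: "\<forall>S\<in>B. \<forall>i\<in>S. S - {i} \<in> B"
  proof (intro ballI, rule ccontr)
    fix S i assume S: "S \<in> B" and i: "i \<in> S" and nS: "S - {i} \<notin> B"
    have "P (shift i B)"
      unfolding P_def
    proof (intro conjI allI impI)
      show "shift i B \<subseteq> Pow N" using shift_Pow BN by blast
      show "card (shift i B) = card A" using card_shift[OF finB] PB P_def by simp
      fix Y assume "shatters (symdiff_pow (shift i B) k) Y"
      then have "shatters (shift i (symdiff_pow B k)) Y"
        using shatters_mono sp_shift m by metis
      then have "shatters (symdiff_pow B k) Y" by (rule shatters_shift)
      then show "shatters (symdiff_pow A k) Y" using PB P_def by blast
    qed
    then have le: "w B \<le> w (shift i B)" by (rule minB)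
    have "w (shift i B) = (\<Sum>S\<in>B. card (mv i B S))"
      unfolding w_def shift_def by (rule sum.reindex_cong[OF shift_inj refl refl])
    also have "\<dots> < (\<Sum>S\<in>B. card S)"
    proof (rule sum_strict_mono_ex1[OF finB])
      show "\<forall>x\<in>B. card (mv i B x) \<le> card x"
      proof
        fix x assume "x \<in> B"
        then have "finite x" using finS by blast
        then show "card (mv i B x) \<le> card x" by (rule card_mono[OF _ mv_sub])
      qed
      have "mv i B S = S - {i}" using mv1[OF i nS] .
      moreover have "finite S" using finS S by blast
      ultimately have "card (mv i B S) < card S" using card_Diff1_less[OF _ i] by simp
      then show "\<exists>a\<in>B. card (mv i B a) < card a" using S by blast
    qed
    finally show False using le unfolding w_def by simp
  qed
  have "downclosed B" using down_from_step[OF step finS] .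
  moreover have "B \<subseteq> Pow N \<and> card B = card A \<and>
           (\<forall>Y. shatters (symdiff_pow B k) Y \<longrightarrow> shatters (symdiff_pow A k) Y)"
    using PB unfolding P_def .
  ultimately show ?thesis by (intro exI[of _ B]) simp
qed

definition kunion :: "nat \<Rightarrow> nat \<Rightarrow> nat set set \<Rightarrow> bool" where
  "kunion k d F \<longleftrightarrow> (\<forall>g. (\<forall>i<k. g i \<in> F) \<longrightarrow> card (\<Union>i<k. g i) \<le> d)"

lemma kunionD: "kunion k d F \<Longrightarrow> (\<And>i. i < k \<Longrightarrow> g i \<in> F) \<Longrightarrow> card (\<Union>i<k. g i) \<le> d"
  unfolding kunion_def by blast

lemma small_union:
  assumes dc: "downclosed G" and fin: "finite (\<Union>G)" and rk: "r < k" and ku: "kunion k r G"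
  shows "card (\<Union>G) \<le> r"
proof (rule ccontr)
  assume "\<not> card (\<Union>G) \<le> r"
  then have "Suc r \<le> card (\<Union>G)" by simp
  then obtain V where V: "V \<subseteq> \<Union>G" "card V = Suc r" "finite V"
    by (rule obtain_subset_with_card_n)
  obtain f where f: "bij_betw f {0..<Suc r} V" using ex_bij_betw_nat_finite[OF V(3)] V(2) by auto
  define g where "g i = {f (min i r)}" for i
  have "g i \<in> G" for i
  proof -
    have "min i r < Suc r" by simp
    then have "f (min i r) \<in> V" using f by (meson atLeastLessThan_iff bij_betwE zero_le)
    then obtain S where S: "S \<in> G" "f (min i r) \<in> S" using V(1) by blast
    then show ?thesis unfolding g_def using downclosedD[OF dc S(1)] by simp
  qed
  then have le: "card (\<Union>i<k. g i) \<le> r" using kunionD[OF ku] by blast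
  have "V \<subseteq> (\<Union>i<k. g i)"
  proof
    fix y assume "y \<in> V"
    then obtain j where j: "j < Suc r" "y = f j" using f
      by (metis atLeastLessThan_iff bij_betw_imp_surj_on imageE)
    then have "j < k" "min j r = j" using rk by auto
    then show "y \<in> (\<Union>i<k. g i)" unfolding g_def using j by force
  qed
  moreover have "finite (\<Union>i<k. g i)" unfolding g_def by simp
  ultimately have "card V \<le> card (\<Union>i<k. g i)" by (simp add: card_mono)
  then show False using le V(2) by simp
qed

lemma card_le_pow: "F \<subseteq> Pow V \<Longrightarrow> finite V \<Longrightarrow> card F \<le> 2 ^ card V"
  by (metis card_Pow card_mono finite_Pow_iff)

lemma avoid:
  assumes pd: "pairwise disjnt M" and fM: "finite M" and fU: "finite U" and lt: "card U < card M"
  shows "\<exists>C\<in>M. C \<inter> U = {}"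
proof (rule ccontr)
  assume "\<not> (\<exists>C\<in>M. C \<inter> U = {})"
  then have "\<forall>C\<in>M. \<exists>x. x \<in> C \<inter> U" by blast
  then obtain c where c: "\<forall>C\<in>M. c C \<in> C \<inter> U" by metis
  have "inj_on c M"
  proof (rule inj_onI)
    fix C C' assume "C \<in> M" "C' \<in> M" "c C = c C'"
    then have "\<not> disjnt C C'" using c unfolding disjnt_def by (metis IntE disjoint_iff)
    then show "C = C'" using pd \<open>C \<in> M\<close> \<open>C' \<in> M\<close> unfolding pairwise_def by blast
  qed
  moreover have "c ` M \<subseteq> U" using c by blast
  ultimately have "card M \<le> card U" using fU card_inj_on_le by blast
  then show False using lt by simp
qed

lemma maxdisj:
  assumes fH: "finite H" and nd: "\<forall>M\<subseteq>H. pairwise disjnt M \<longrightarrow> card M < K"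
    and ne: "\<forall>S\<in>H. S \<noteq> {}"
  shows "\<exists>M\<subseteq>H. pairwise disjnt M \<and> card M < K \<and> (\<forall>S\<in>H. S \<inter> \<Union>M \<noteq> {})"
proof -
  define P where "P M \<longleftrightarrow> M \<subseteq> H \<and> pairwise disjnt M" for M
  have "P {}" unfolding P_def by simp
  moreover have "\<forall>y. P y \<longrightarrow> card y < K" using nd unfolding P_def by blast
  ultimately obtain M where PM: "P M" and mx: "\<forall>y. P y \<longrightarrow> card y \<le> card M"
    using ex_has_greatest_nat[of P "{}" card K] by blast
  have MH: "M \<subseteq> H" and pdM: "pairwise disjnt M" using PM unfolding P_def by auto
  have fM: "finite M" using MH fH by (rule finite_subset)
  have "\<forall>S\<in>H. S \<inter> \<Union>M \<noteq> {}"
  proof (intro ballI notI)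
    fix S assume S: "S \<in> H" and e: "S \<inter> \<Union>M = {}"
    have "S \<notin> M" using S e ne by blast
    have "pairwise disjnt (insert S M)"
      using pdM e unfolding pairwise_def disjnt_def by blast
    then have "P (insert S M)" using S MH unfolding P_def by blast
    then have "card (insert S M) \<le> card M" using mx by blast
    then show False using \<open>S \<notin> M\<close> fM by simp
  qed
  then show ?thesis using MH pdM nd by blast
qed

lemma greedy:
  assumes fU: "finite U0"
    and Mf: "\<And>i. i < m \<Longrightarrow> pairwise disjnt (Mf i) \<and> finite (Mf i) \<and> card U0 + m * q < card (Mf i)
                      \<and> (\<forall>C\<in>Mf i. finite C \<and> card C = q)"
  shows "\<exists>c. \<forall>i<m. c i \<in> Mf i \<and> c i \<inter> U0 = {} \<and> (\<forall>j<i. c i \<inter> c j = {})"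
proof -
  have "\<forall>m'\<le>m. \<exists>c. \<forall>i<m'. c i \<in> Mf i \<and> c i \<inter> U0 = {} \<and> (\<forall>j<i. c i \<inter> c j = {})"
  proof (intro allI impI)
    fix m' assume "m' \<le> m"
    then show "\<exists>c. \<forall>i<m'. c i \<in> Mf i \<and> c i \<inter> U0 = {} \<and> (\<forall>j<i. c i \<inter> c j = {})"
    proof (induction m')
      case 0 then show ?case by simp
    next
      case (Suc m')
      then obtain c where c: "\<forall>i<m'. c i \<in> Mf i \<and> c i \<inter> U0 = {} \<and> (\<forall>j<i. c i \<inter> c j = {})"
        by auto
      define U where "U = U0 \<union> (\<Union>j<m'. c j)"
      have m'm: "m' < m" using Suc.prems by simp
      note Mm = Mf[OF m'm]
      have fc: "finite (c j) \<and> card (c j) = q" if "j < m'" for j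
        using c that Mf[of j] m'm by auto
      have "card (\<Union>j<m'. c j) \<le> (\<Sum>j<m'. card (c j))" by (rule card_UN_le) simp
      also have "\<dots> = m' * q" using fc by simp
      finally have cu: "card (\<Union>j<m'. c j) \<le> m' * q" .
      have fU': "finite U" unfolding U_def using fU fc by simp
      have "card U \<le> card U0 + card (\<Union>j<m'. c j)" unfolding U_def by (rule card_Un_le)
      also have "\<dots> \<le> card U0 + m' * q" using cu by simp
      also have "\<dots> \<le> card U0 + m * q" using m'm by simp
      also have "\<dots> < card (Mf m')" using Mm by blast
      finally have "card U < card (Mf m')" .
      then obtain C where C: "C \<in> Mf m'" "C \<inter> U = {}" using avoid[OF _ _ fU'] Mm by blast
      define c' where "c' = c(m' := C)"
      have "\<forall>i<Suc m'. c' i \<in> Mf i \<and> c' i \<inter> U0 = {} \<and> (\<forall>j<i. c' i \<inter> c' j = {})"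
      proof (intro allI impI)
        fix i assume i: "i < Suc m'"
        show "c' i \<in> Mf i \<and> c' i \<inter> U0 = {} \<and> (\<forall>j<i. c' i \<inter> c' j = {})"
        proof (cases "i = m'")
          case True
          then show ?thesis using C unfolding c'_def U_def by auto
        next
          case False
          then have "i < m'" using i by simp
          then show ?thesis using c unfolding c'_def by auto
        qed
      qed
      then show ?case by blast
    qed
  qed
  then show ?thesis by blast
qed

lemma card_slice: "finite Y \<Longrightarrow> card {C. C \<subseteq> Y \<and> card C \<le> q} = binom_le (card Y) q"
proof -
  assume fY: "finite Y"
  have e: "{C. C \<subseteq> Y \<and> card C \<le> q} = (\<Union>j\<in>{0..q}. {C. C \<subseteq> Y \<and> card C = j})" by auto
  have "card (\<Union>j\<in>{0..q}. {C. C \<subseteq> Y \<and> card C = j}) = (\<Sum>j=0..q. card {C. C \<subseteq> Y \<and> card C = j})"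
    by (rule card_UN_disjoint) (use fY in auto)
  also have "\<dots> = (\<Sum>j=0..q. card Y choose j)" using n_subsets[OF fY] by simp
  finally show ?thesis unfolding binom_le_def e .
qed

lemma card_le_slice: "L \<subseteq> {C. C \<subseteq> Y \<and> card C \<le> q} \<Longrightarrow> finite Y \<Longrightarrow> card L \<le> binom_le (card Y) q"
proof -
  assume L: "L \<subseteq> {C. C \<subseteq> Y \<and> card C \<le> q}" and fY: "finite Y"
  have "{C. C \<subseteq> Y \<and> card C \<le> q} \<subseteq> Pow Y" by blast
  then have "finite {C. C \<subseteq> Y \<and> card C \<le> q}" using fY by (meson finite_Pow_iff finite_subset)
  then have "card L \<le> card {C. C \<subseteq> Y \<and> card C \<le> q}" using L by (simp add: card_mono)
  then show ?thesis using card_slice[OF fY] by simp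
qed

lemma card_with_point:
  assumes fN: "finite N" and q: "0 < q"
  shows "card {S. S \<subseteq> N \<and> card S = q \<and> x \<in> S} \<le> card N choose (q - 1)"
proof -
  let ?A = "{S. S \<subseteq> N \<and> card S = q \<and> x \<in> S}"
  have "inj_on (\<lambda>S. S - {x}) ?A"
    by (rule inj_onI) (metis (no_types, lifting) insert_Diff mem_Collect_eq)
  moreover have "(\<lambda>S. S - {x}) ` ?A \<subseteq> {R. R \<subseteq> N \<and> card R = q - 1}"
  proof
    fix R assume "R \<in> (\<lambda>S. S - {x}) ` ?A"
    then obtain S where S: "S \<subseteq> N" "card S = q" "x \<in> S" "R = S - {x}" by blast
    have "finite S" using S(1) fN by (rule finite_subset)
    then show "R \<in> {R. R \<subseteq> N \<and> card R = q - 1}" using S by auto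
  qed
  moreover have "finite {R. R \<subseteq> N \<and> card R = q - 1}" using fN by simp
  ultimately have "card ?A \<le> card {R. R \<subseteq> N \<and> card R = q - 1}" using card_inj_on_le by blast
  then show ?thesis using n_subsets[OF fN] by simp
qed

lemma transversal:
  assumes fN: "finite N" and q: "0 < q" and HN: "H \<subseteq> {S. S \<subseteq> N \<and> card S = q}"
    and nd: "\<forall>M\<subseteq>H. pairwise disjnt M \<longrightarrow> card M < K"
  shows "card H \<le> K * q * (card N choose (q - 1))"
proof -
  have "H \<subseteq> Pow N" using HN by blast
  then have fH: "finite H" using fN by (meson finite_Pow_iff finite_subset)
  have ne: "\<forall>S\<in>H. S \<noteq> {}" using HN q by auto
  obtain M where M: "M \<subseteq> H" "pairwise disjnt M" "card M < K" "\<forall>S\<in>H. S \<inter> \<Union>M \<noteq> {}"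
    using maxdisj[OF fH nd ne] by blast
  have fM: "finite M" using M(1) fH by (rule finite_subset)
  have "card (\<Union>M) \<le> (\<Sum>C\<in>M. card C)" by (rule card_Union_le_sum_card)
  also have "\<dots> = card M * q" using M(1) HN by (simp add: subset_iff)
  also have "\<dots> \<le> K * q" using M(3) by simp
  finally have cT: "card (\<Union>M) \<le> K * q" .
  have "\<Union>M \<subseteq> N" using M(1) HN by blast
  then have fT: "finite (\<Union>M)" using fN by (rule finite_subset)
  have "H \<subseteq> (\<Union>x\<in>\<Union>M. {S. S \<subseteq> N \<and> card S = q \<and> x \<in> S})"
  proof
    fix S assume S: "S \<in> H"
    then obtain x where x: "x \<in> S" "x \<in> \<Union>M" using M(4) by blast
    have "S \<in> {S. S \<subseteq> N \<and> card S = q \<and> x \<in> S}" using HN S x(1) by auto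
    then show "S \<in> (\<Union>x\<in>\<Union>M. {S. S \<subseteq> N \<and> card S = q \<and> x \<in> S})" using x(2) by (rule UN_I[rotated])
  qed
  then have "card H \<le> card (\<Union>x\<in>\<Union>M. {S. S \<subseteq> N \<and> card S = q \<and> x \<in> S})"
  proof (rule card_mono[rotated])
    show "finite (\<Union>x\<in>\<Union>M. {S. S \<subseteq> N \<and> card S = q \<and> x \<in> S})"
      by (rule finite_subset[where B="Pow N"]) (auto simp: fN)
  qed
  also have "\<dots> \<le> (\<Sum>x\<in>\<Union>M. card {S. S \<subseteq> N \<and> card S = q \<and> x \<in> S})"
    by (rule card_UN_le[OF fT])
  also have "\<dots> \<le> (\<Sum>x\<in>\<Union>M. card N choose (q - 1))"
    by (rule sum_mono) (rule card_with_point[OF fN q])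
  also have "\<dots> = card (\<Union>M) * (card N choose (q - 1))" by simp
  also have "\<dots> \<le> K * q * (card N choose (q - 1))" using cT by simp
  finally show ?thesis .
qed

lemma binom_le_Suc: "binom_le (Suc m) (Suc q) = binom_le m (Suc q) + binom_le m q"
proof -
  have "binom_le (Suc m) (Suc q) = (Suc m choose 0) + (\<Sum>j=0..q. Suc m choose Suc j)"
    unfolding binom_le_def using sum.atLeast0_atMost_Suc_shift[of "\<lambda>j. Suc m choose j" q] by simp
  also have "\<dots> = 1 + (\<Sum>j=0..q. (m choose j) + (m choose Suc j))" by simp
  also have "\<dots> = (\<Sum>j=0..q. m choose j) + ((m choose 0) + (\<Sum>j=0..q. m choose Suc j))"
    by (simp add: sum.distrib)
  also have "(m choose 0) + (\<Sum>j=0..q. m choose Suc j) = binom_le m (Suc q)"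
    unfolding binom_le_def using sum.atLeast0_atMost_Suc_shift[of "\<lambda>j. m choose j" q] by simp
  finally show ?thesis unfolding binom_le_def by simp
qed

lemma choose_mono_n: "m \<le> n \<Longrightarrow> (m choose j) \<le> (n choose j)"
proof (induction n)
  case 0 then show ?case by simp
next
  case (Suc n)
  show ?case
  proof (cases "m = Suc n")
    case True then show ?thesis by simp
  next
    case False
    then have "(m choose j) \<le> (n choose j)" using Suc by simp
    also have "\<dots> \<le> (Suc n choose j)" by (cases j) simp_all
    finally show ?thesis .
  qed
qed

lemma binom_le_mono: "m \<le> n \<Longrightarrow> binom_le m q \<le> binom_le n q"
  unfolding binom_le_def by (intro sum_mono choose_mono_n)

lemma binom_le_shift:
  assumes "m \<le> n"
  shows "binom_le n (Suc q) \<le> binom_le m (Suc q) + (n - m) * binom_le n q"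
  using assms
proof (induction n)
  case 0 then show ?case by simp
next
  case (Suc n)
  show ?case
  proof (cases "m = Suc n")
    case True then show ?thesis by simp
  next
    case False
    then have mn: "m \<le> n" using Suc.prems by simp
    have "binom_le (Suc n) (Suc q) = binom_le n (Suc q) + binom_le n q" by (rule binom_le_Suc)
    also have "\<dots> \<le> binom_le m (Suc q) + (n - m) * binom_le n q + binom_le n q"
      using Suc.IH[OF mn] by simp
    also have "\<dots> \<le> binom_le m (Suc q) + (n - m) * binom_le (Suc n) q + binom_le (Suc n) q"
      using binom_le_mono[of n "Suc n" q] by (simp add: add_mono)
    also have "\<dots> = binom_le m (Suc q) + (Suc n - m) * binom_le (Suc n) q"
      using mn by (simp add: Suc_diff_le)
    finally show ?thesis .
  qed
qed

lemma choose_ratio: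
  assumes "Suc j * M \<le> n - j"
  shows "(n choose j) * M \<le> (n choose Suc j)"
proof -
  have e: "Suc j * (n choose Suc j) = (n - j) * (n choose j)"
    using binomial_absorption[of j n] binomial_absorb_comp[of n j] by simp
  have "Suc j * ((n choose j) * M) = (Suc j * M) * (n choose j)" by (simp only: mult_ac)
  also have "\<dots> \<le> (n - j) * (n choose j)" using assms by (rule mult_right_mono) simp
  also have "\<dots> = Suc j * (n choose Suc j)" using e by simp
  finally show ?thesis using mult_le_cancel1[of "Suc j"] by simp
qed

lemma choose_chain:
  assumes M: "1 \<le> M" and h: "\<forall>i<q. Suc i * M \<le> n - i"
  shows "\<forall>j\<le>q. (n choose j) \<le> (n choose q)"
  using h
proof (induction q)
  case 0 then show ?case by simp
next
  case (Suc q)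
  have r: "(n choose q) * M \<le> (n choose Suc q)" using Suc.prems by (intro choose_ratio) simp
  have "(n choose q) \<le> (n choose q) * M" using M by simp
  with r have s: "(n choose q) \<le> (n choose Suc q)" by linarith
  show ?case
  proof (intro allI impI)
    fix j assume "j \<le> Suc q"
    then consider "j = Suc q" | "j \<le> q" by linarith
    then show "(n choose j) \<le> (n choose Suc q)"
    proof cases
      case 1 then show ?thesis by simp
    next
      case 2 then show ?thesis using Suc.IH Suc.prems s by (meson le_trans less_SucI)
    qed
  qed
qed

lemma binom_le_small:
  assumes q: "0 < q" and n: "q + q * (C * q + 1) \<le> n"
  shows "C * binom_le n (q - 1) \<le> (n choose q)"
proof -
  define M where "M = C * q + 1"
  have M1: "1 \<le> M" unfolding M_def by simp
  have h: "\<forall>i<q. Suc i * M \<le> n - i"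
  proof (intro allI impI)
    fix i assume "i < q"
    then have "Suc i \<le> q" by simp
    then have "Suc i * M \<le> q * M" by (rule mult_right_mono) simp
    also have "\<dots> \<le> n - q" using n unfolding M_def by (simp add: algebra_simps)
    also have "\<dots> \<le> n - i" using \<open>i < q\<close> by simp
    finally show "Suc i * M \<le> n - i" .
  qed
  have ch: "\<forall>j\<le>q. (n choose j) \<le> (n choose q)" by (rule choose_chain[OF M1 h])
  have each: "(n choose j) * M \<le> (n choose q)" if "j \<le> q - 1" for j
  proof -
    have "j < q" using that q by simp
    then have "(n choose j) * M \<le> (n choose Suc j)" using h by (intro choose_ratio) simp
    also have "\<dots> \<le> (n choose q)" using ch \<open>j < q\<close> by simp
    finally show ?thesis .
  qed
  have "binom_le n (q - 1) * M = (\<Sum>j=0..q-1. (n choose j) * M)"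
    unfolding binom_le_def by (simp add: sum_distrib_right)
  also have "\<dots> \<le> (\<Sum>j=0..q-1. (n choose q))" by (rule sum_mono) (use each in simp)
  also have "\<dots> = q * (n choose q)" using q by simp
  finally have "binom_le n (q - 1) * M \<le> q * (n choose q)" .
  moreover have "q * (C * binom_le n (q - 1)) \<le> binom_le n (q - 1) * M"
    unfolding M_def by (simp add: algebra_simps)
  ultimately have "q * (C * binom_le n (q - 1)) \<le> q * (n choose q)" by linarith
  then show ?thesis using q mult_le_cancel1[of q] by simp
qed

lemma final_arith:
  fixes F p b c Z D r :: nat
  assumes p: "1 \<le> p" and hF: "F \<le> (p - 1) * (b + c) + D * b" and hZ: "b + c \<le> Z + r * b"
    and hD: "(D + p * r) * b \<le> c"
  shows "F \<le> p * Z"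
proof -
  obtain p' where p': "p = Suc p'" using p by (cases p) auto
  have a: "p * (b + c) \<le> p * (Z + r * b)" using hZ by simp
  have a': "p' * (b + c) + b + c \<le> p * Z + p * r * b" using a p' by (simp add: algebra_simps)
  have d': "D * b + p * r * b \<le> c" using hD by (simp add: algebra_simps)
  have "F \<le> p' * (b + c) + D * b" using hF p' by simp
  then show ?thesis using a' d' by linarith
qed

lemma core0:
  assumes fN: "finite N" and FN: "F \<subseteq> Pow N" and dc: "downclosed F" and ku: "kunion k r F" and rk: "r < k"
  shows "card F \<le> 2 ^ r"
proof -
  have "\<Union>F \<subseteq> N" using FN by blast
  then have fU: "finite (\<Union>F)" using fN by (rule finite_subset)
  have "card (\<Union>F) \<le> r" by (rule small_union[OF dc fU rk ku])
  moreover have "card F \<le> 2 ^ card (\<Union>F)" by (rule card_le_pow[OF _ fU]) blast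
  ultimately show ?thesis by (meson le_trans one_le_numeral power_increasing)
qed

lemma exists_X:
  assumes fN: "finite N" and FN: "F \<subseteq> Pow N" and dc: "downclosed F" and ku: "kunion k d F"
    and dl: "d < k * Suc q" and k: "0 < k"
  shows "\<exists>X\<subseteq>N. card X \<le> k * Suc q \<and> (\<forall>S\<in>F. card (S - X) \<le> q)"
proof -
  define Ft where "Ft = {S\<in>F. card S = Suc q}"
  have FtN: "Ft \<subseteq> Pow N" unfolding Ft_def using FN by blast
  have fFt: "finite Ft" using FtN fN by (meson finite_Pow_iff finite_subset)
  have ne: "\<forall>S\<in>Ft. S \<noteq> {}" unfolding Ft_def by auto
  have nd: "\<forall>M\<subseteq>Ft. pairwise disjnt M \<longrightarrow> card M < k"
  proof (intro allI impI; rule ccontr)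
    fix M assume MF: "M \<subseteq> Ft" and pd: "pairwise disjnt M" and nk: "\<not> card M < k"
    then obtain M' where M': "M' \<subseteq> M" "card M' = k" "finite M'"
      using obtain_subset_with_card_n[of k M] by (metis not_less)
    obtain f where f: "bij_betw f {0..<k} M'" using ex_bij_betw_nat_finite[OF M'(3)] M'(2) by auto
    have im: "f ` {..<k} = M'" using f unfolding bij_betw_def by (simp add: lessThan_atLeast0)
    have "\<And>i. i < k \<Longrightarrow> f i \<in> F"
    proof -
      fix i assume "i < k"
      then have "f i \<in> M'" using im by blast
      then show "f i \<in> F" using M'(1) MF unfolding Ft_def by blast
    qed
    then have le: "card (\<Union>i<k. f i) \<le> d" by (rule kunionD[OF ku])
    have pd': "pairwise disjnt M'" using pd M'(1) by (rule pairwise_subset)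
    have fin': "\<And>A. A \<in> M' \<Longrightarrow> finite A"
    proof -
      fix A assume "A \<in> M'"
      then have "A \<subseteq> N" using M'(1) MF FtN by blast
      then show "finite A" using fN by (rule finite_subset)
    qed
    have "card (\<Union>M') = sum card M'" by (rule card_Union_disjoint[OF pd' fin'])
    also have "\<dots> = k * Suc q" using M'(1) MF M'(2) unfolding Ft_def by (simp add: subset_iff)
    finally have "card (\<Union>i<k. f i) = k * Suc q" using im by simp
    then show False using le dl by simp
  qed
  obtain M0 where M0: "M0 \<subseteq> Ft" "pairwise disjnt M0" "card M0 < k" "\<forall>S\<in>Ft. S \<inter> \<Union>M0 \<noteq> {}"
    using maxdisj[OF fFt nd ne] by blast
  define X where "X = \<Union>M0"
  have XN: "X \<subseteq> N" unfolding X_def using M0(1) FtN by blast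
  have "card X \<le> sum card M0" unfolding X_def by (rule card_Union_le_sum_card)
  also have "\<dots> = card M0 * Suc q" using M0(1) unfolding Ft_def by (simp add: subset_iff)
  also have "\<dots> \<le> k * Suc q" using M0(3) by (intro mult_right_mono) simp_all
  finally have cX: "card X \<le> k * Suc q" .
  have sm: "\<forall>S\<in>F. card (S - X) \<le> q"
  proof (intro ballI; rule ccontr)
    fix S assume S: "S \<in> F" and nq: "\<not> card (S - X) \<le> q"
    then obtain C where C: "C \<subseteq> S - X" "card C = Suc q" "finite C"
      using obtain_subset_with_card_n[of "Suc q" "S - X"] by (metis not_less_eq_eq)
    have "C \<subseteq> S" using C(1) by blast
    then have "C \<in> F" using downclosedD[OF dc S] by blast
    then have "C \<in> Ft" unfolding Ft_def using C(2) by blast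
    then have "C \<inter> X \<noteq> {}" using M0(4) unfolding X_def by blast
    then show False using C(1) by blast
  qed
  show ?thesis using XN cX sm by blast
qed

definition link :: "nat set \<Rightarrow> nat set \<Rightarrow> nat set set \<Rightarrow> nat set \<Rightarrow> nat set set" where
  "link N X F B = {C. C \<subseteq> N - X \<and> B \<union> C \<in> F}"

definition good :: "nat \<Rightarrow> nat \<Rightarrow> nat set \<Rightarrow> nat set \<Rightarrow> nat set set \<Rightarrow> nat set \<Rightarrow> bool" where
  "good K q N X F B \<longleftrightarrow> (\<exists>M. M \<subseteq> link N X F B \<and> pairwise disjnt M \<and> (\<forall>C\<in>M. card C = q) \<and> K \<le> card M \<and> finite M)"

lemma link_q:
  assumes fN: "finite N" and FN: "F \<subseteq> Pow N" and sm: "\<forall>S\<in>F. card (S - X) \<le> q"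
  shows "link N X F B \<subseteq> {C. C \<subseteq> N \<and> card C \<le> q}"
proof
  fix C assume "C \<in> link N X F B"
  then have C: "C \<subseteq> N - X" "B \<union> C \<in> F" unfolding link_def by auto
  have sub: "C \<subseteq> (B \<union> C) - X" using C(1) by blast
  have "B \<union> C \<subseteq> N" using C(2) FN by blast
  then have "finite ((B \<union> C) - X)" using fN by (meson finite_Diff finite_subset)
  then have "card C \<le> card ((B \<union> C) - X)" using sub by (rule card_mono)
  also have "\<dots> \<le> q" using sm C(2) by blast
  finally show "C \<in> {C. C \<subseteq> N \<and> card C \<le> q}" using C(1) by blast
qed

lemma link_anti:
  assumes dc: "downclosed F" and "B' \<subseteq> B"
  shows "link N X F B \<subseteq> link N X F B'"
proof
  fix C assume "C \<in> link N X F B"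
  then have C: "C \<subseteq> N - X" "B \<union> C \<in> F" unfolding link_def by auto
  have "B' \<union> C \<subseteq> B \<union> C" using assms(2) by blast
  then have "B' \<union> C \<in> F" using downclosedD[OF dc C(2)] by blast
  then show "C \<in> link N X F B'" using C(1) unfolding link_def by blast
qed

lemma card_F_links:
  assumes fN: "finite N" and FN: "F \<subseteq> Pow N" and XN: "X \<subseteq> N"
  shows "card F \<le> (\<Sum>B\<in>Pow X. card (link N X F B))"
proof -
  have fX: "finite X" using XN fN by (rule finite_subset)
  have FU: "F \<subseteq> (\<Union>B\<in>Pow X. {S\<in>F. S \<inter> X = B})"
  proof
    fix S assume "S \<in> F"
    then show "S \<in> (\<Union>B\<in>Pow X. {S\<in>F. S \<inter> X = B})" by (intro UN_I[of "S \<inter> X"]) auto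
  qed
  have fF: "finite F" using FN fN by (meson finite_Pow_iff finite_subset)
  have fU: "finite (\<Union>B\<in>Pow X. {S\<in>F. S \<inter> X = B})" using fX fF by simp
  have "card F \<le> card (\<Union>B\<in>Pow X. {S\<in>F. S \<inter> X = B})" using FU fU by (simp add: card_mono)
  also have "\<dots> \<le> (\<Sum>B\<in>Pow X. card {S\<in>F. S \<inter> X = B})" by (rule card_UN_le) (simp add: fX)
  also have "\<dots> \<le> (\<Sum>B\<in>Pow X. card (link N X F B))"
  proof (rule sum_mono)
    fix B assume "B \<in> Pow X"
    have inj: "inj_on (\<lambda>S. S - X) {S\<in>F. S \<inter> X = B}"
    proof (rule inj_onI)
      fix S S' assume S: "S \<in> {S\<in>F. S \<inter> X = B}" "S' \<in> {S\<in>F. S \<inter> X = B}" "S - X = S' - X"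
      have "S = (S \<inter> X) \<union> (S - X)" "S' = (S' \<inter> X) \<union> (S' - X)" by blast+
      then show "S = S'" using S by simp
    qed
    have im: "(\<lambda>S. S - X) ` {S\<in>F. S \<inter> X = B} \<subseteq> link N X F B"
    proof
      fix C assume "C \<in> (\<lambda>S. S - X) ` {S\<in>F. S \<inter> X = B}"
      then obtain S where S: "S \<in> F" "S \<inter> X = B" "C = S - X" by blast
      have "S \<subseteq> N" using S(1) FN by blast
      then have "C \<subseteq> N - X" using S(3) by blast
      moreover have "B \<union> C = S" using S(2,3) by blast
      ultimately show "C \<in> link N X F B" unfolding link_def using S(1) by simp
    qed
    have "finite (link N X F B)" unfolding link_def
      by (rule finite_subset[where B="Pow N"]) (auto simp: fN)
    then show "card {S\<in>F. S \<inter> X = B} \<le> card (link N X F B)"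
      using card_inj_on_le[OF inj im] by blast
  qed
  finally show ?thesis .
qed

lemma good_down:
  assumes dc: "downclosed F" and "good K q N X F B" and "B' \<subseteq> B"
  shows "good K q N X F B'"
proof -
  obtain M where M: "M \<subseteq> link N X F B" "pairwise disjnt M" "\<forall>C\<in>M. card C = q" "K \<le> card M" "finite M"
    using assms(2) unfolding good_def by blast
  have "M \<subseteq> link N X F B'" using M(1) link_anti[OF dc assms(3), of N X] by (rule order_trans)
  then show ?thesis unfolding good_def using M(2-5) by blast
qed

lemma good_kunion:
  assumes fN: "finite N" and FN: "F \<subseteq> Pow N" and dc: "downclosed F" and ku: "kunion k (k * q + r) F"
    and XN: "X \<subseteq> N" and sm: "\<forall>S\<in>F. card (S - X) \<le> q" and K: "k * q < K"
  shows "kunion k r {B. B \<subseteq> X \<and> good K q N X F B}"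
  unfolding kunion_def
proof (intro allI impI)
  fix b assume b: "\<forall>i<k. b i \<in> {B. B \<subseteq> X \<and> good K q N X F B}"
  have gi: "\<And>i. i < k \<Longrightarrow> good K q N X F (b i)" using b by simp
  define Mf where "Mf i = (SOME M. M \<subseteq> link N X F (b i) \<and> pairwise disjnt M \<and> (\<forall>C\<in>M. card C = q) \<and> K \<le> card M \<and> finite M)" for i
  have Mf: "\<And>i. i < k \<Longrightarrow> Mf i \<subseteq> link N X F (b i) \<and> pairwise disjnt (Mf i) \<and> (\<forall>C\<in>Mf i. card C = q) \<and> K \<le> card (Mf i) \<and> finite (Mf i)"
  proof -
    fix i assume "i < k"
    from gi[OF this, unfolded good_def] show "?thesis i" unfolding Mf_def by (rule someI_ex)
  qed
  have lq: "\<And>B. link N X F B \<subseteq> {C. C \<subseteq> N \<and> card C \<le> q}" by (rule link_q[OF fN FN sm])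
  have Mf': "\<And>i. i < k \<Longrightarrow> pairwise disjnt (Mf i) \<and> finite (Mf i) \<and> card {} + k * q < card (Mf i)
                      \<and> (\<forall>C\<in>Mf i. finite C \<and> card C = q)"
  proof -
    fix i assume i: "i < k"
    note h = Mf[OF i]
    have "\<forall>C\<in>Mf i. finite C"
    proof
      fix C assume "C \<in> Mf i"
      then have "C \<subseteq> N" using h lq by blast
      then show "finite C" using fN by (rule finite_subset)
    qed
    then show "pairwise disjnt (Mf i) \<and> finite (Mf i) \<and> card {} + k * q < card (Mf i)
                      \<and> (\<forall>C\<in>Mf i. finite C \<and> card C = q)" using h K by auto
  qed
  obtain c where c: "\<forall>i<k. c i \<in> Mf i \<and> c i \<inter> {} = {} \<and> (\<forall>j<i. c i \<inter> c j = {})"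
    using greedy[of "{}" k Mf q] Mf' by auto
  have cl: "\<And>i. i < k \<Longrightarrow> c i \<in> link N X F (b i)" using c Mf by blast
  have cX: "\<And>i. i < k \<Longrightarrow> c i \<subseteq> N - X" using cl unfolding link_def by blast
  have gF: "\<And>i. i < k \<Longrightarrow> b i \<union> c i \<in> F" using cl unfolding link_def by blast
  have le: "card (\<Union>i<k. b i \<union> c i) \<le> k * q + r" by (rule kunionD[OF ku gF])
  have bX: "(\<Union>i<k. b i) \<subseteq> X" using b by blast
  have fX: "finite X" using XN fN by (rule finite_subset)
  have fb: "finite (\<Union>i<k. b i)" using bX fX by (rule finite_subset)
  have fc: "finite (\<Union>i<k. c i)"
    by (rule finite_subset[of _ N]) (use cX fN in \<open>auto simp: UN_least\<close>)
  have ccard: "card (\<Union>i<k. c i) = k * q"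
  proof -
    have "card (\<Union>i<k. c i) = (\<Sum>i<k. card (c i))"
    proof (rule card_UN_disjoint)
      show "finite {..<k}" by simp
      show "\<forall>i\<in>{..<k}. finite (c i)" using cX fN by (meson finite_Diff finite_subset lessThan_iff)
      show "\<forall>i\<in>{..<k}. \<forall>j\<in>{..<k}. i \<noteq> j \<longrightarrow> c i \<inter> c j = {}"
      proof (intro ballI impI)
        fix i j assume "i \<in> {..<k}" "j \<in> {..<k}" "i \<noteq> j"
        then consider "i < j" "j < k" | "j < i" "i < k" by fastforce
        then show "c i \<inter> c j = {}"
        proof cases
          case 1 then have "c j \<inter> c i = {}" using c by blast
          then show ?thesis by blast
        next
          case 2 then show ?thesis using c by blast
        qed
      qed
    qed
    also have "\<dots> = k * q" using c Mf by simp
    finally show ?thesis .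
  qed
  have cX': "(\<Union>i<k. c i) \<subseteq> N - X" by (rule UN_least) (use cX in simp)
  have disj: "(\<Union>i<k. b i) \<inter> (\<Union>i<k. c i) = {}" using bX cX' by blast
  have "(\<Union>i<k. b i \<union> c i) = (\<Union>i<k. b i) \<union> (\<Union>i<k. c i)" by blast
  then have "card (\<Union>i<k. b i \<union> c i) = card (\<Union>i<k. b i) + k * q"
    using card_Un_disjoint[OF fb fc disj] ccard by simp
  then show "card (\<Union>i<k. b i) \<le> r" using le by simp
qed

lemma caseA:
  assumes fN: "finite N" and FN: "F \<subseteq> Pow N" and dc: "downclosed F" and ku: "kunion k (k * q + r) F"
    and k: "0 < k" and rk: "r < k" and RX: "R \<subseteq> X" and XN: "X \<subseteq> N" and cR: "card R = r"
    and gR: "good K q N X F R" and K: "Suc q + (k - 1) * q < K"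
  shows "\<forall>S\<in>F. card (S - R) \<le> q"
proof (intro ballI; rule ccontr)
  fix S assume S: "S \<in> F" and nq: "\<not> card (S - R) \<le> q"
  then obtain C' where C': "C' \<subseteq> S - R" "card C' = Suc q" "finite C'"
    using obtain_subset_with_card_n[of "Suc q" "S - R"] by (metis not_less_eq_eq)
  have "C' \<subseteq> S" using C'(1) by blast
  then have C'F: "C' \<in> F" using downclosedD[OF dc S] by blast
  obtain M where M: "M \<subseteq> link N X F R" "pairwise disjnt M" "\<forall>C\<in>M. card C = q" "K \<le> card M" "finite M"
    using gR unfolding good_def by blast
  have Mfin: "\<forall>C\<in>M. finite C \<and> card C = q"
  proof
    fix C assume "C \<in> M"
    then have "C \<subseteq> N" using M(1) unfolding link_def by blast
    then have "finite C" using fN by (rule finite_subset)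
    then show "finite C \<and> card C = q" using M(3) \<open>C \<in> M\<close> by simp
  qed
  have cM: "card C' + (k - 1) * q < card M" using C'(2) M(4) K by simp
  have Mh: "\<And>i. i < k - 1 \<Longrightarrow> pairwise disjnt M \<and> finite M \<and> card C' + (k - 1) * q < card M
                      \<and> (\<forall>C\<in>M. finite C \<and> card C = q)" using M(2,5) Mfin cM by blast
  have "\<exists>c. \<forall>i<k - 1. c i \<in> M \<and> c i \<inter> C' = {} \<and> (\<forall>j<i. c i \<inter> c j = {})"
    by (rule greedy[of C' "k - 1" "\<lambda>_. M" q, OF C'(3) Mh])
  then obtain c where c: "\<forall>i<k - 1. c i \<in> M \<and> c i \<inter> C' = {} \<and> (\<forall>j<i. c i \<inter> c j = {})"
    by blast
  have cl: "\<And>i. i < k - 1 \<Longrightarrow> c i \<in> link N X F R" using c M(1) by blast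
  have cX: "\<And>i. i < k - 1 \<Longrightarrow> c i \<subseteq> N - X" using cl unfolding link_def by blast
  have cF: "\<And>i. i < k - 1 \<Longrightarrow> R \<union> c i \<in> F" using cl unfolding link_def by blast
  define g where "g i = (if i = 0 then C' else R \<union> c (i - 1))" for i
  have gF: "\<And>i. i < k \<Longrightarrow> g i \<in> F"
    unfolding g_def using C'F cF by auto
  have le: "card (\<Union>i<k. g i) \<le> k * q + r" by (rule kunionD[OF ku gF])
  define U where "U = (\<Union>j<k - 1. c j)"
  have UX: "U \<subseteq> N - X" unfolding U_def by (rule UN_least) (use cX in simp)
  have fX: "finite X" using XN fN by (rule finite_subset)
  have fR: "finite R" using RX fX by (rule finite_subset)
  have fU: "finite U" using UX fN by (meson finite_Diff finite_subset)
  have sub: "C' \<union> R \<union> U \<subseteq> (\<Union>i<k. g i)"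
  proof -
    have "C' \<subseteq> g 0" unfolding g_def by simp
    then have a: "C' \<subseteq> (\<Union>i<k. g i)" using k by blast
    have b: "R \<subseteq> (\<Union>i<k. g i)"
    proof (cases "k = 1")
      case True
      then have "card R = 0" using cR rk by simp
      then have "R = {}" using fR by simp
      then show ?thesis by simp
    next
      case False
      then have "1 < k" using k by simp
      moreover have "R \<subseteq> g 1" unfolding g_def by simp
      ultimately show ?thesis by blast
    qed
    have u: "U \<subseteq> (\<Union>i<k. g i)"
      unfolding U_def
    proof (rule UN_least)
      fix j assume "j \<in> {..<k - 1}"
      then have "Suc j < k" "c j \<subseteq> g (Suc j)" unfolding g_def by auto
      then show "c j \<subseteq> (\<Union>i<k. g i)" by blast
    qed
    show ?thesis using a b u by blast
  qed
  have cU: "card U = (k - 1) * q"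
  proof -
    have "card U = (\<Sum>i<k - 1. card (c i))"
      unfolding U_def
    proof (rule card_UN_disjoint)
      show "finite {..<k - 1}" by simp
      show "\<forall>i\<in>{..<k - 1}. finite (c i)" using c Mfin by blast
      show "\<forall>i\<in>{..<k - 1}. \<forall>j\<in>{..<k - 1}. i \<noteq> j \<longrightarrow> c i \<inter> c j = {}"
      proof (intro ballI impI)
        fix i j assume "i \<in> {..<k - 1}" "j \<in> {..<k - 1}" "i \<noteq> j"
        then consider "i < j" "j < k - 1" | "j < i" "i < k - 1" by fastforce
        then show "c i \<inter> c j = {}"
        proof cases
          case 1 then have "c j \<inter> c i = {}" using c by blast
          then show ?thesis by blast
        next
          case 2 then show ?thesis using c by blast
        qed
      qed
    qed
    also have "\<dots> = (k - 1) * q" using c Mfin by simp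
    finally show ?thesis .
  qed
  have d1: "C' \<inter> R = {}" using C'(1) by blast
  have d2: "(C' \<union> R) \<inter> U = {}"
  proof -
    have "C' \<inter> U = {}" unfolding U_def using c by blast
    moreover have "R \<inter> U = {}" using RX UX by blast
    ultimately show ?thesis by blast
  qed
  have "card (C' \<union> R \<union> U) = card (C' \<union> R) + card U"
    by (rule card_Un_disjoint) (use C'(3) fR fU d2 in auto)
  also have "card (C' \<union> R) = Suc q + r" using card_Un_disjoint[OF C'(3) fR d1] C'(2) cR by simp
  finally have "card (C' \<union> R \<union> U) = Suc q + r + (k - 1) * q" using cU by simp
  also have "\<dots> = k * q + r + 1" using k by (cases k) (auto simp: algebra_simps)
  finally have eq: "card (C' \<union> R \<union> U) = k * q + r + 1" .
  have "finite (\<Union>i<k. g i)"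
    by (rule finite_subset[of _ N]) (use gF FN fN in \<open>auto simp: UN_least\<close>)
  then have "card (C' \<union> R \<union> U) \<le> card (\<Union>i<k. g i)" using sub by (simp add: card_mono)
  then show False using eq le by simp
qed

lemma caseA_count:
  assumes fN: "finite N" and FN: "F \<subseteq> Pow N" and RN: "R \<subseteq> N" and cR: "card R = r"
    and sm: "\<forall>S\<in>F. card (S - R) \<le> q"
  shows "card F \<le> 2 ^ r * binom_le (card N - r) q"
proof -
  let ?T = "{C. C \<subseteq> N - R \<and> card C \<le> q}"
  have sub: "F \<subseteq> (\<lambda>(B, C). B \<union> C) ` (Pow R \<times> ?T)"
  proof
    fix S assume S: "S \<in> F"
    have "S = (S \<inter> R) \<union> (S - R)" by blast
    moreover have "(S \<inter> R, S - R) \<in> Pow R \<times> ?T" using S FN sm by blast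
    ultimately show "S \<in> (\<lambda>(B, C). B \<union> C) ` (Pow R \<times> ?T)"
      by (metis (no_types, lifting) case_prod_conv image_eqI)
  qed
  have fR: "finite R" using RN fN by (rule finite_subset)
  have fNR: "finite (N - R)" using fN by simp
  have fT: "finite ?T" by (rule finite_subset[where B="Pow (N - R)"]) (auto simp: fNR)
  have "card F \<le> card ((\<lambda>(B, C). B \<union> C) ` (Pow R \<times> ?T))"
    using sub by (rule card_mono[rotated]) (simp add: fR fT)
  also have "\<dots> \<le> card (Pow R \<times> ?T)" by (rule card_image_le) (simp add: fR fT)
  also have "\<dots> = card (Pow R) * card ?T" by (rule card_cartesian_product)
  also have "\<dots> = 2 ^ r * binom_le (card (N - R)) q"
    using card_Pow[of R] fR cR card_slice[OF fNR] by simp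
  also have "card (N - R) = card N - r" using card_Diff_subset[OF fR RN] cR by simp
  finally show ?thesis .
qed

lemma caseB_card:
  assumes fX: "finite X" and GX: "G \<subseteq> Pow X" and cU: "card (\<Union>G) \<le> r" and nr: "\<forall>R\<in>G. card R \<noteq> r"
  shows "card G < 2 ^ r"
proof -
  define V where "V = \<Union>G"
  have fV: "finite V" unfolding V_def using GX fX by (meson Union_least PowD finite_subset subset_iff)
  have GV: "G \<subseteq> Pow V" unfolding V_def by blast
  show ?thesis
  proof (cases "card V = r")
    case True
    then have "V \<notin> G" using nr by blast
    then have "G \<subset> Pow V" using GV by blast
    then have "card G < card (Pow V)" by (rule psubset_card_mono[rotated]) (simp add: fV)
    then show ?thesis using True card_Pow[of V] fV by simp
  next
    case False
    then have "card V < r" using cU unfolding V_def by simp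
    then have "2 ^ card V < (2::nat) ^ r" by (rule power_strict_increasing) simp
    moreover have "card G \<le> 2 ^ card V" by (rule card_le_pow[OF GV fV])
    ultimately show ?thesis by linarith
  qed
qed

lemma Ebound:
  assumes fN: "finite N" and FN: "F \<subseteq> Pow N" and sm: "\<forall>S\<in>F. card (S - X) \<le> q" and q: "0 < q"
    and ng: "\<not> good K q N X F B"
  shows "card (link N X F B) \<le> binom_le (card N) (q - 1) + K * q * (card N choose (q - 1))"
proof -
  define H where "H = {C \<in> link N X F B. card C = q}"
  have lq: "link N X F B \<subseteq> {C. C \<subseteq> N \<and> card C \<le> q}" by (rule link_q[OF fN FN sm])
  have sub: "link N X F B \<subseteq> {C. C \<subseteq> N \<and> card C \<le> q - 1} \<union> H"
  proof
    fix C assume C: "C \<in> link N X F B"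
    then have "C \<subseteq> N" "card C \<le> q" using lq by blast+
    then show "C \<in> {C. C \<subseteq> N \<and> card C \<le> q - 1} \<union> H" using C unfolding H_def by auto
  qed
  have fA: "finite {C. C \<subseteq> N \<and> card C \<le> q - 1}"
    by (rule finite_subset[where B="Pow N"]) (auto simp: fN)
  have HN: "H \<subseteq> {S. S \<subseteq> N \<and> card S = q}" unfolding H_def using lq by blast
  have fH: "finite H" by (rule finite_subset[OF HN]) (rule finite_subset[where B="Pow N"], auto simp: fN)
  have nd: "\<forall>M\<subseteq>H. pairwise disjnt M \<longrightarrow> card M < K"
  proof (intro allI impI; rule ccontr)
    fix M assume MH: "M \<subseteq> H" and pd: "pairwise disjnt M" and nk: "\<not> card M < K"
    have "M \<subseteq> link N X F B" using MH unfolding H_def by blast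
    moreover have "\<forall>C\<in>M. card C = q" using MH unfolding H_def by blast
    moreover have "finite M" using MH fH by (rule finite_subset)
    moreover have "K \<le> card M" using nk by simp
    ultimately have "good K q N X F B" unfolding good_def using pd by blast
    then show False using ng by simp
  qed
  have "card (link N X F B) \<le> card ({C. C \<subseteq> N \<and> card C \<le> q - 1} \<union> H)"
    using sub by (rule card_mono[rotated]) (use fA fH in simp)
  also have "\<dots> \<le> card {C. C \<subseteq> N \<and> card C \<le> q - 1} + card H" by (rule card_Un_le)
  also have "card {C. C \<subseteq> N \<and> card C \<le> q - 1} = binom_le (card N) (q - 1)" by (rule card_slice[OF fN])
  also have "card H \<le> K * q * (card N choose (q - 1))" by (rule transversal[OF fN q HN nd])
  finally show ?thesis by simp
qed

definition nz :: "nat \<Rightarrow> nat \<Rightarrow> nat \<Rightarrow> nat" where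
  "nz k q r = q + q * (((2 ^ (k * Suc q) * (1 + (k * q + q + 2) * q)) + 2 ^ r * r) * q + 1)"

lemma core1:
  assumes fN: "finite N" and FN: "F \<subseteq> Pow N" and dc: "downclosed F" and ku: "kunion k (k * q + r) F"
    and k: "0 < k" and rk: "r < k" and q: "0 < q" and n: "nz k q r \<le> card N"
  shows "card F \<le> 2 ^ r * binom_le (card N - r) q"
proof -
  define K where "K = k * q + q + 2"
  define D where "D = 2 ^ (k * Suc q) * (1 + K * q)"
  have dl: "k * q + r < k * Suc q" using rk by simp
  obtain X where XN: "X \<subseteq> N" and cX: "card X \<le> k * Suc q" and sm: "\<forall>S\<in>F. card (S - X) \<le> q"
    using exists_X[OF fN FN dc ku dl k] by blast
  have fX: "finite X" using XN fN by (rule finite_subset)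
  define G where "G = {B. B \<subseteq> X \<and> good K q N X F B}"
  have GX: "G \<subseteq> Pow X" unfolding G_def by blast
  have kuG: "kunion k r G" unfolding G_def
    by (rule good_kunion[OF fN FN dc ku XN sm]) (simp add: K_def)
  have dcG: "downclosed G" unfolding downclosed_def
  proof (intro ballI allI impI)
    fix S T assume S: "S \<in> G" and T: "T \<subseteq> S"
    then have "S \<subseteq> X" "good K q N X F S" unfolding G_def by blast+
    then show "T \<in> G" unfolding G_def using good_down[OF dc _ T] T by blast
  qed
  have fUG: "finite (\<Union>G)" using GX fX by (meson Union_least PowD finite_subset subset_iff)
  have cUG: "card (\<Union>G) \<le> r" by (rule small_union[OF dcG fUG rk kuG])
  show ?thesis
  proof (cases "\<exists>R\<in>G. card R = r")
    case True
    then obtain R where R: "R \<in> G" "card R = r" by blast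
    then have RX: "R \<subseteq> X" and gR: "good K q N X F R" unfolding G_def by blast+
    have Kb: "Suc q + (k - 1) * q < K" unfolding K_def
    proof -
      have "(k - 1) * q \<le> k * q" by simp
      then show "Suc q + (k - 1) * q < k * q + q + 2" by linarith
    qed
    have "\<forall>S\<in>F. card (S - R) \<le> q" by (rule caseA[OF fN FN dc ku k rk RX XN R(2) gR Kb])
    moreover have "R \<subseteq> N" using RX XN by blast
    ultimately show ?thesis using caseA_count[OF fN FN _ R(2)] by blast
  next
    case False
    then have nr: "\<forall>R\<in>G. card R \<noteq> r" by blast
    have cG: "card G < 2 ^ r" by (rule caseB_card[OF fX GX cUG nr])
    define n where "n = card N"
    define b where "b = binom_le n (q - 1)"
    define c where "c = n choose q"
    define Z where "Z = binom_le (n - r) q"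
    have fPX: "finite (Pow X)" using fX by simp
    have s1: "card F \<le> (\<Sum>B\<in>Pow X. card (link N X F B))" by (rule card_F_links[OF fN FN XN])
    also have "\<dots> = (\<Sum>B\<in>Pow X - G. card (link N X F B)) + (\<Sum>B\<in>G. card (link N X F B))"
      by (rule sum.subset_diff[OF GX fPX])
    finally have s2: "card F \<le> (\<Sum>B\<in>Pow X - G. card (link N X F B)) + (\<Sum>B\<in>G. card (link N X F B))" .
    have lq: "\<And>B. link N X F B \<subseteq> {C. C \<subseteq> N \<and> card C \<le> q}" by (rule link_q[OF fN FN sm])
    have "(\<Sum>B\<in>G. card (link N X F B)) \<le> card G * binom_le n q"
    proof -
      have "\<forall>B\<in>G. card (link N X F B) \<le> binom_le n q"
        unfolding n_def using card_le_slice[OF lq fN] by blast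
      then show ?thesis using sum_bounded_above[of G "\<lambda>B. card (link N X F B)" "binom_le n q"] by simp
    qed
    also have "\<dots> \<le> (2 ^ r - 1) * binom_le n q" using cG by (intro mult_right_mono) simp_all
    finally have sG: "(\<Sum>B\<in>G. card (link N X F B)) \<le> (2 ^ r - 1) * binom_le n q" .
    have Eb: "\<forall>B\<in>Pow X - G. card (link N X F B) \<le> (1 + K * q) * b"
    proof
      fix B assume B: "B \<in> Pow X - G"
      then have ng: "\<not> good K q N X F B" unfolding G_def by blast
      have "card (link N X F B) \<le> binom_le n (q - 1) + K * q * (n choose (q - 1))"
        unfolding n_def by (rule Ebound[OF fN FN sm q ng])
      also have "(n choose (q - 1)) \<le> b" unfolding b_def binom_le_def
        by (rule member_le_sum) auto
      then have "binom_le n (q - 1) + K * q * (n choose (q - 1)) \<le> b + K * q * b"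
        unfolding b_def by simp
      finally show "card (link N X F B) \<le> (1 + K * q) * b" by (simp add: algebra_simps)
    qed
    have "(\<Sum>B\<in>Pow X - G. card (link N X F B)) \<le> card (Pow X - G) * ((1 + K * q) * b)"
      using sum_bounded_above[of "Pow X - G" "\<lambda>B. card (link N X F B)" "(1 + K * q) * b"] Eb by simp
    also have "card (Pow X - G) \<le> 2 ^ (k * Suc q)"
    proof -
      have "card (Pow X - G) \<le> card (Pow X)" using fPX by (simp add: card_mono)
      also have "\<dots> = 2 ^ card X" using fX by (simp add: card_Pow)
      also have "\<dots> \<le> 2 ^ (k * Suc q)" using cX by (rule power_increasing) simp
      finally show ?thesis .
    qed
    then have "card (Pow X - G) * ((1 + K * q) * b) \<le> 2 ^ (k * Suc q) * ((1 + K * q) * b)"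
      by (rule mult_right_mono) simp
    finally have sX: "(\<Sum>B\<in>Pow X - G. card (link N X F B)) \<le> D * b" unfolding D_def mult.assoc .
    obtain q' where q': "q = Suc q'" using q by (cases q) auto
    have bc: "binom_le n q = b + c" unfolding b_def c_def binom_le_def q' by simp
    have hF: "card F \<le> (2 ^ r - 1) * (b + c) + D * b" using s2 sG sX bc by simp
    have hZ: "b + c \<le> Z + r * b"
    proof -
      have bq: "b = binom_le n q'" unfolding b_def q' by simp
      have h0: "binom_le n (Suc q') \<le> binom_le (n - r) (Suc q') + (n - (n - r)) * b"
        unfolding bq by (rule binom_le_shift) simp
      have e1: "b + c = binom_le n (Suc q')" using bc q' by simp
      have e2: "Z = binom_le (n - r) (Suc q')" unfolding Z_def q' ..
      have h1: "b + c \<le> Z + (n - (n - r)) * b" using h0 e1 e2 by linarith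
      have h2: "(n - (n - r)) * b \<le> r * b" by (rule mult_right_mono) simp_all
      from h1 h2 show ?thesis by linarith
    qed
    have hD: "(D + 2 ^ r * r) * b \<le> c"
      unfolding b_def c_def
    proof (rule binom_le_small[OF q])
      show "q + q * ((D + 2 ^ r * r) * q + 1) \<le> n" using n unfolding nz_def D_def K_def n_def .
    qed
    have "card F \<le> 2 ^ r * Z" by (rule final_arith[OF _ hF hZ hD]) simp
    then show ?thesis unfolding Z_def n_def .
  qed
qed

lemma VC_ge:
  assumes "Y \<subseteq> {1..n}" "shatters F Y"
  shows "card Y \<le> VC n F"
proof -
  have "{card Y |Y. Y \<subseteq> {1..n} \<and> shatters F Y} = card ` {Y. Y \<subseteq> {1..n} \<and> shatters F Y}" by blast
  moreover have "finite {Y. Y \<subseteq> {1..n} \<and> shatters F Y}"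
    by (rule finite_subset[where B="Pow {1..n}"]) auto
  ultimately have fin: "finite {card Y |Y. Y \<subseteq> {1..n} \<and> shatters F Y}" by simp
  have "card Y \<in> {card Y |Y. Y \<subseteq> {1..n} \<and> shatters F Y}" using assms by blast
  then show ?thesis unfolding VC_def using fin by (simp add: Max_ge)
qed

theorem theorem3:
  fixes k d r :: nat
  assumes "k > 0" and "d > 0" and "r < k" and "d mod k = r"
  shows "\<exists>n0::nat. \<forall>n \<ge> n0. \<forall>A. A \<subseteq> Pow {1..n} \<longrightarrow>
           VC n (symdiff_pow A k) \<le> d \<longrightarrow>
           card A \<le> 2 ^ r * binom_le (n - r) (d div k)"
proof -
  define q where "q = d div k"
  have dq: "d = k * q + r" unfolding q_def using assms(4) div_mult_mod_eq[of d k] by (simp add: mult.commute)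
  show ?thesis
  proof (intro exI[of _ "nz k q r"] allI impI)
    fix n A assume n: "nz k q r \<le> n" and AN: "A \<subseteq> Pow {1..n}" and vc: "VC n (symdiff_pow A k) \<le> d"
    define N where "N = {1..n}"
    have fN: "finite N" and cN: "card N = n" unfolding N_def by simp_all
    obtain B where B: "B \<subseteq> Pow N" "card B = card A" "downclosed B"
      "\<forall>Y. shatters (symdiff_pow B k) Y \<longrightarrow> shatters (symdiff_pow A k) Y"
      using reduce[OF AN[folded N_def] fN assms(1)] by blast
    have ku: "kunion k d B" unfolding kunion_def
    proof (intro allI impI)
      fix g assume g: "\<forall>i<k. g i \<in> B"
      have "shatters (symdiff_pow B k) (\<Union>i<k. g i)" by (rule down_shatters[OF B(3) assms(1) g])
      then have sh: "shatters (symdiff_pow A k) (\<Union>i<k. g i)" using B(4) by blast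
      have "(\<Union>i<k. g i) \<subseteq> {1..n}" using g B(1) unfolding N_def by blast
      then have "card (\<Union>i<k. g i) \<le> VC n (symdiff_pow A k)" using sh by (rule VC_ge)
      then show "card (\<Union>i<k. g i) \<le> d" using vc by simp
    qed
    show "card A \<le> 2 ^ r * binom_le (n - r) (d div k)"
    proof (cases "q = 0")
      case True
      then have "d = r" using dq by simp
      then have "card B \<le> 2 ^ r" using core0[OF fN B(1) B(3) _ assms(3)] ku by simp
      moreover have "binom_le (n - r) 0 = 1" unfolding binom_le_def by simp
      ultimately show ?thesis using B(2) True unfolding q_def by simp
    next
      case False
      then have "card B \<le> 2 ^ r * binom_le (card N - r) q"
        using core1[OF fN B(1) B(3) _ assms(1) assms(3)] ku dq n cN by simp
      then show ?thesis using B(2) cN unfolding q_def by simp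
    qed
  qed
qed

end
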